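(* Let $(C^n)_{n\ge0}$, together with $(\phi^n)_{n\ge 0}$ and $E^n=-\partial_h\phi^n$, be a solution of the fully discrete scheme described in the context, and for each $n\ge0$ denote by $C^{(1,n+1)}_2$ the intermediate coefficient $C^{(1)}_2$ computed in Step 1 when computing $C^{n+1}$ from $C^n$. Then for all $n\ge1$, $$\lambda^2\,\frac{\partial_hE^{n+1}-2\,\partial_hE^{n}+\partial_hE^{n-1}}{\Delta t^2}+\partial_h\big(E^{n+1}C^{n+1}_0\big)=\partial_h^2\Big(\sqrt{2}\,T_0\,C^{(1,n+1)}_2+T_0\,C^{n+1}_0\Big)+\lambda^2\,\Delta t\,\partial_h\Big(\frac{E^{n+1}\,\partial_hE^{n+1}-E^{n}\,\partial_hE^{n}}{\Delta t}\Big).$$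
   Context: Parameters: $T_0>0$, $\lambda>0$, $\Delta t>0$, $N_H\in\mathbb{N}^*$. Mesh: $a<b$, $N_x\in\mathbb{N}^*$, $\mathcal{J}=\{1,\dots,N_x\}$, points $a=x_{1/2}<x_1<x_{3/2}<\dots<x_{N_x}<x_{N_x+1/2}=b$, $\Delta x_j=x_{j+1/2}-x_{j-1/2}$. A grid function is $C=(C_j)_{j\in\mathcal{J}}$, with indices understood periodically. Discrete derivative: $(\partial_h C)_j=(C_{j+1}-C_{j-1})/(2\Delta x_j)$. Products of grid functions are pointwise, $1$ denotes the constant grid function. Scheme: unknowns $C^n=(C^n_k)_{0\le k\le N_H}$ (grid functions), with conventions $C_{-1}=0$ and $C_k=0$ for $k>N_H$. Given $C^n$, Step 1 finds grid functions $C^{(1)}=(C^{(1)}_k)_{0\le k\le N_H}$ and $\phi^{(1)}$ with $\sum_j\Delta x_j\phi^{(1)}_j=0$ such that $\frac{C^{(1)}_1-C^n_1}{\Delta t}+\sqrt{T_0}\,\partial_hC^{(1)}_0+\sqrt{2T_0}\,\partial_hC^{(1)}_2-\frac{1}{\sqrt{T_0}}E^{(1)}=0$, $\frac{C^{(1)}_k-C^n_k}{\Delta t}+\sqrt{kT_0}\,\partial_hC^{(1)}_{k-1}+\sqrt{(k+1)T_0}\,\partial_hC^{(1)}_{k+1}=0$ for $k\in\{0,\dots,N_H\}\setminus\{1\}$, $E^{(1)}=-\partial_h\phi^{(1)}$, $-\lambda^2\partial_h^2\phi^{(1)}=C^{(1)}_0-1$. Step 2 sets $C^{n+1}_0=C^{(1)}_0$,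 $E^{n+1}=E^{(1)}$, $\phi^{n+1}=\phi^{(1)}$, and for $k=1,\dots,N_H$: $\frac{C^{n+1}_k-C^{(1)}_k}{\Delta t}-\sqrt{\frac{k}{T_0}}\,E^{n+1}\big(C^{n+1}_{k-1}-\delta_{k,1}\big)=0$ ($\delta$ the Kronecker symbol). *)

theory Defs
  imports Complex_Main
begin

text \<open>Grid functions are modelled as functions int => real; only the values at
  indices j in {1..Nx} are meaningful, and all neighbour accesses are reduced
  periodically into {1..Nx} via per.\<close>

definition per :: "nat \<Rightarrow> int \<Rightarrow> int" where
  "per Nx j = (j - 1) mod int Nx + 1"

text \<open>Cell sizes: xh i is the half point x_{i+1/2} (so xh 0 = a, xh Nx = b),
  and dxm xh j = x_{j+1/2} - x_{j-1/2}.\<close>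
definition dxm :: "(nat \<Rightarrow> real) \<Rightarrow> int \<Rightarrow> real" where
  "dxm xh j = xh (nat j) - xh (nat j - 1)"

definition dh :: "nat \<Rightarrow> (nat \<Rightarrow> real) \<Rightarrow> (int \<Rightarrow> real) \<Rightarrow> int \<Rightarrow> real" where
  "dh Nx xh C j = (C (per Nx (j + 1)) - C (per Nx (j - 1))) / (2 * dxm xh (per Nx j))"

definition cut :: "nat \<Rightarrow> (nat \<Rightarrow> int \<Rightarrow> real) \<Rightarrow> nat \<Rightarrow> int \<Rightarrow> real" where
  "cut NH F k = (if k \<le> NH then F k else (\<lambda>_. 0))"

end

theory Submission
  imports Defs
begin


lemma per_in: "Nx \<ge> 1 \<Longrightarrow> per Nx i \<in> {1..int Nx}"
proof -
  assume "Nx \<ge> 1"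
  hence "(i - 1) mod int Nx < int Nx" "0 \<le> (i - 1) mod int Nx" by simp_all
  thus ?thesis unfolding per_def by simp
qed
lemma dh_cong: "Nx \<ge> 1 \<Longrightarrow> (\<And>i. i \<in> {1..int Nx} \<Longrightarrow> f i = g i) \<Longrightarrow> dh Nx xh f j = dh Nx xh g j"
  unfolding dh_def using per_in by metis
lemma dh_lin: "dh Nx xh (\<lambda>i. a * f i + b * g i) j = a * dh Nx xh f j + b * dh Nx xh g j"
  unfolding dh_def by (simp add: add_divide_distrib[symmetric] times_divide_eq_right[symmetric] algebra_simps)
lemma dh_add: "dh Nx xh (\<lambda>i. f i + g i) j = dh Nx xh f j + dh Nx xh g j"
  using dh_lin[of Nx xh 1 f 1 g j] by simp
lemma dh_diff: "dh Nx xh (\<lambda>i. f i - g i) j = dh Nx xh f j - dh Nx xh g j"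
  using dh_lin[of Nx xh 1 f "-1" g j] by simp
lemma dh_cmult: "dh Nx xh (\<lambda>i. a * f i) j = a * dh Nx xh f j"
  using dh_lin[of Nx xh a f 0 f j] by simp
lemma dh_uminus: "dh Nx xh (\<lambda>i. - f i) j = - dh Nx xh f j"
  using dh_lin[of Nx xh "-1" f 0 f j] by simp
lemma dh_divc: "dh Nx xh (\<lambda>i. f i / a) j = dh Nx xh f j / a"
  using dh_cmult[of Nx xh "1/a" f j] by simp
lemma dh_const: "dh Nx xh (\<lambda>i. c) j = 0"
  unfolding dh_def by simp

theorem proposition3p2:
  fixes T0 lmb dt a b :: real and NH Nx :: nat
    and xh :: "nat \<Rightarrow> real"
    and C :: "nat \<Rightarrow> nat \<Rightarrow> int \<Rightarrow> real"
    and C1 :: "nat \<Rightarrow> nat \<Rightarrow> int \<Rightarrow> real"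
    and phi E :: "nat \<Rightarrow> int \<Rightarrow> real"
  assumes T0: "T0 > 0" and lmb: "lmb > 0" and dt: "dt > 0" and NH: "NH \<ge> 1"
    and ab: "a < b" and Nx: "Nx \<ge> 1"
    and mesh0: "xh 0 = a" and meshN: "xh Nx = b"
    and mesh_mono: "\<And>i. i < Nx \<Longrightarrow> xh i < xh (Suc i)"
    and E_def: "\<And>n j. j \<in> {1..int Nx} \<Longrightarrow> E n j = - dh Nx xh (phi n) j"
    and phi_mean: "\<And>n. (\<Sum>j\<in>{1..int Nx}. dxm xh j * phi n j) = 0"
    and poisson0: "\<And>j. j \<in> {1..int Nx} \<Longrightarrow>
          (- (lmb^2)) * dh Nx xh (dh Nx xh (phi 0)) j = C 0 0 j - 1"
    and step1: "\<And>n k j. k \<le> NH \<Longrightarrow> j \<in> {1..int Nx} \<Longrightarrow>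
          (C1 (Suc n) k j - C n k j) / dt
          + sqrt (real k * T0) * dh Nx xh (C1 (Suc n) (k - 1)) j
          + sqrt (real (k + 1) * T0) * dh Nx xh (cut NH (C1 (Suc n)) (k + 1)) j
          - (if k = 1 then E (Suc n) j / sqrt T0 else 0) = 0"
    and poisson: "\<And>n j. j \<in> {1..int Nx} \<Longrightarrow>
          (- (lmb^2)) * dh Nx xh (dh Nx xh (phi (Suc n))) j = C1 (Suc n) 0 j - 1"
    and step2_0: "\<And>n j. j \<in> {1..int Nx} \<Longrightarrow> C (Suc n) 0 j = C1 (Suc n) 0 j"
    and step2: "\<And>n k j. 1 \<le> k \<Longrightarrow> k \<le> NH \<Longrightarrow> j \<in> {1..int Nx} \<Longrightarrow>
          (C (Suc n) k j - C1 (Suc n) k j) / dt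
          - sqrt (real k / T0) * E (Suc n) j
              * (C (Suc n) (k - 1) j - (if k = 1 then 1 else 0)) = 0"
    and n: "n \<ge> 1" and j: "j \<in> {1..int Nx}"
  shows "lmb^2 * (dh Nx xh (E (Suc n)) j - 2 * dh Nx xh (E n) j + dh Nx xh (E (n - 1)) j) / dt^2
         + dh Nx xh (\<lambda>i. E (Suc n) i * C (Suc n) 0 i) j
       = dh Nx xh (dh Nx xh (\<lambda>i. sqrt 2 * T0 * cut NH (C1 (Suc n)) 2 i + T0 * C (Suc n) 0 i)) j
         + lmb^2 * dt * dh Nx xh (\<lambda>i. (E (Suc n) i * dh Nx xh (E (Suc n)) i
                                          - E n i * dh Nx xh (E n) i) / dt) j"
  proof -
  let ?D = "dh Nx xh"
  obtain m where nm: "n = Suc m" using n by (cases n) auto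
  have Nx1: "Nx \<ge> 1" by fact
  have cut1: "cut NH F (Suc 0) = F (Suc 0)" for F using NH by (simp add: cut_def)
  have EE: "?D (E k) i = - ?D (?D (phi k)) i" if "i \<in> {1..int Nx}" for k i
  proof -
    have "?D (E k) i = ?D (\<lambda>i. - 1 * ?D (phi k) i) i"
      by (rule dh_cong[OF Nx1]) (simp add: E_def)
    thus ?thesis by (simp only: dh_cmult)
  qed
  have A: "lmb^2 * ?D (E k) i = C k 0 i - 1" if i: "i \<in> {1..int Nx}" for k i
  proof (cases k)
    case 0 thus ?thesis using poisson0[OF i] EE[OF i] by simp

  next
    case (Suc k') thus ?thesis using poisson[OF i, of k'] EE[OF i] step2_0[OF i] by simp
  qed
  have B: "C (Suc k) 0 i - C k 0 i = - dt * sqrt T0 * ?D (C1 (Suc k) 1) i" if i: "i \<in> {1..int Nx}" for k i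
  proof -
    have "(C1 (Suc k) 0 i - C k 0 i) / dt + sqrt T0 * ?D (C1 (Suc k) 1) i = 0"
      using step1[OF _ i, of 0 k] by (simp add: cut1)
    thus ?thesis using dt step2_0[OF i] by (simp add: field_simps)
  qed
  have sq2: "sqrt (2 * T0) = sqrt 2 * sqrt T0" by (simp add: real_sqrt_mult)
  have sT: "sqrt T0 > 0" using T0 by simp
  define G where "G i = - sqrt T0 * ?D (C (Suc n) 0) i - sqrt 2 * sqrt T0 * ?D (cut NH (C1 (Suc n)) 2) i
     + (E (Suc n) i + E n i * (C n 0 i - 1)) / sqrt T0" for i
  have DC: "?D (C1 (Suc n) 0) i = ?D (C (Suc n) 0) i" for i
    by (rule dh_cong[OF Nx1]) (simp add: step2_0)
  have G: "C1 (Suc n) 1 i - C1 n 1 i = dt * G i" if i: "i \<in> {1..int Nx}" for i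
  proof -
    have d: "(C1 (Suc n) 1 i - C n 1 i) / dt + sqrt T0 * ?D (C1 (Suc n) 0) i
        + sqrt (2 * T0) * ?D (cut NH (C1 (Suc n)) 2) i - E (Suc n) i / sqrt T0 = 0"
      using step1[OF _ i, of 1 n] NH by (simp add: numeral_2_eq_2)
    have e: "(C n 1 i - C1 n 1 i) / dt - E n i * (C n 0 i - 1) / sqrt T0 = 0"
      using step2[OF _ _ i, of 1 m] NH nm by (simp add: real_sqrt_divide)
    show ?thesis using d e dt sT unfolding G_def DC sq2 by (simp add: field_simps)
  qed
  have L1: "lmb^2 * (?D (E (Suc n)) j - 2 * ?D (E n) j + ?D (E (n - 1)) j) / dt^2 = - sqrt T0 * ?D G j"
  proof -
    have "lmb^2 * (?D (E (Suc n)) j - 2 * ?D (E n) j + ?D (E (n - 1)) j)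
       = (C (Suc n) 0 j - C n 0 j) - (C n 0 j - C m 0 j)"
      using A[OF j, of "Suc n"] A[OF j, of n] A[OF j, of m] nm by (simp add: algebra_simps)
    also have "\<dots> = - dt * sqrt T0 * (?D (C1 (Suc n) 1) j - ?D (C1 n 1) j)"
      using B[OF j, of n] B[OF j, of m] nm by (simp add: algebra_simps)
    also have "?D (C1 (Suc n) 1) j - ?D (C1 n 1) j = ?D (\<lambda>i. dt * G i) j"
      by (simp only: dh_diff[symmetric]) (rule dh_cong[OF Nx1], rule G, simp)
    also have "\<dots> = dt * ?D G j" by (rule dh_cmult)
    finally show ?thesis using dt by (simp add: power2_eq_square field_simps)
  qed
  have DG: "?D G j = - sqrt T0 * ?D (?D (C (Suc n) 0)) j - sqrt 2 * sqrt T0 * ?D (?D (cut NH (C1 (Suc n)) 2)) j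
     + (?D (E (Suc n)) j + ?D (\<lambda>i. E n i * (C n 0 i - 1)) j) / sqrt T0"
    unfolding G_def by (simp only: dh_add dh_diff dh_cmult dh_divc mult_minus_left dh_uminus)
  have R1: "?D (?D (\<lambda>i. sqrt 2 * T0 * cut NH (C1 (Suc n)) 2 i + T0 * C (Suc n) 0 i)) j
      = sqrt 2 * T0 * ?D (?D (cut NH (C1 (Suc n)) 2)) j + T0 * ?D (?D (C (Suc n) 0)) j"
  proof -
    have "?D (\<lambda>i. sqrt 2 * T0 * cut NH (C1 (Suc n)) 2 i + T0 * C (Suc n) 0 i)
      = (\<lambda>j. sqrt 2 * T0 * ?D (cut NH (C1 (Suc n)) 2) j + T0 * ?D (C (Suc n) 0) j)"
      by (rule ext, rule dh_lin)
    thus ?thesis by (simp only: dh_lin)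
  qed
  have R2: "lmb^2 * dt * ?D (\<lambda>i. (E (Suc n) i * ?D (E (Suc n)) i - E n i * ?D (E n) i) / dt) j
      = ?D (\<lambda>i. E (Suc n) i * (C (Suc n) 0 i - 1)) j - ?D (\<lambda>i. E n i * (C n 0 i - 1)) j"
  proof -
    have "lmb^2 * dt * ?D (\<lambda>i. (E (Suc n) i * ?D (E (Suc n)) i - E n i * ?D (E n) i) / dt) j
       = ?D (\<lambda>i. lmb^2 * dt * ((E (Suc n) i * ?D (E (Suc n)) i - E n i * ?D (E n) i) / dt)) j"
      by (simp only: dh_cmult)
    also have "\<dots> = ?D (\<lambda>i. E (Suc n) i * (C (Suc n) 0 i - 1) - E n i * (C n 0 i - 1)) j"
    proof (rule dh_cong[OF Nx1])
      fix i assume i: "i \<in> {1..int Nx}"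
      show "lmb^2 * dt * ((E (Suc n) i * ?D (E (Suc n)) i - E n i * ?D (E n) i) / dt)
         = E (Suc n) i * (C (Suc n) 0 i - 1) - E n i * (C n 0 i - 1)"
        using A[OF i, of "Suc n"] A[OF i, of n] dt by (simp add: algebra_simps diff_divide_distrib flip: A[OF i])
    qed
    also have "\<dots> = ?D (\<lambda>i. E (Suc n) i * (C (Suc n) 0 i - 1)) j - ?D (\<lambda>i. E n i * (C n 0 i - 1)) j"
      by (rule dh_diff)
    finally show ?thesis .
  qed
  have R3: "?D (\<lambda>i. E (Suc n) i * (C (Suc n) 0 i - 1)) j = ?D (\<lambda>i. E (Suc n) i * C (Suc n) 0 i) j - ?D (E (Suc n)) j"
  proof -
    have "?D (\<lambda>i. E (Suc n) i * (C (Suc n) 0 i - 1)) j = ?D (\<lambda>i. E (Suc n) i * C (Suc n) 0 i - E (Suc n) i) j"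
      by (simp add: algebra_simps)
    thus ?thesis by (simp only: dh_diff)
  qed
  have ss: "sqrt T0 * sqrt T0 = T0" using T0 by simp
  show ?thesis
    unfolding L1 DG R1 R2 R3 using sT ss
    by (simp add: field_simps) (simp add: ss mult.assoc[symmetric])
qed

end
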